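(* For every $t>0$ and all $\alpha,\beta\ge0$ with $\alpha+\beta\ge1$ or $\alpha+\beta\le\tfrac12$, $$(t^{1-\alpha-\beta}+1)^2\,(t^{2\alpha}-1)\,(t^{2\beta}-1)\ \ge\ 16\,\alpha\beta\,(t-1)^2.$$ *)

theory Defs
  imports Complex_Main
begin

end

theory Submission
  imports Defs
begin

lemma L1:
  fixes l m :: real
  assumes "0 \<le> l" "l \<le> 1" "0 \<le> m"
  shows "sinh (l*m) \<le> l * sinh m"
proof -
  have "(\<lambda>x. l * sinh x - sinh (l*x)) 0 \<le> (\<lambda>x. l * sinh x - sinh (l*x)) m"
  proof (rule DERIV_nonneg_imp_nondecreasing[OF assms(3)])
    fix x :: real assume x: "0 \<le> x" "x \<le> m"
    have "DERIV (\<lambda>x. l * sinh x - sinh (l*x)) x :> l * cosh x - cosh (l*x) * l"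
      by (auto intro!: derivative_eq_intros)
    moreover have "cosh (l*x) \<le> cosh x"
      using x assms by (subst cosh_real_nonneg_le_iff) (auto simp: mult_left_le_one_le)
    hence "l * cosh x - cosh (l*x) * l \<ge> 0"
      using assms by (simp add: mult_left_mono algebra_simps)
    ultimately show "\<exists>y. DERIV (\<lambda>x. l * sinh x - sinh (l*x)) x :> y \<and> y \<ge> 0" by blast
  qed
  thus ?thesis by simp
qed

lemma L2:
  fixes d m :: real
  assumes "0 \<le> d" "d \<le> m"
  shows "sinh d * m \<le> sinh m * d"
proof (cases "m = 0")
  case True thus ?thesis using assms by simp
next
  case False
  hence mp: "m > 0" using assms by simp
  have "sinh ((d/m)*m) \<le> (d/m) * sinh m"
    using assms mp by (intro L1) auto
  hence "sinh d \<le> (d/m) * sinh m" using mp by simp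
  hence "sinh d * m \<le> (d/m) * sinh m * m" using mp by (metis mult_right_mono less_imp_le)
  also have "(d/m) * sinh m * m = sinh m * d" using mp by simp
  finally show ?thesis .
qed

lemma sinh_prod: "sinh (m + d) * sinh (m - d) = sinh m ^ 2 - sinh (d::real) ^ 2"
  by (simp add: sinh_add sinh_diff algebra_simps power2_eq_square[symmetric] cosh_square_eq)

lemma L3:
  fixes x y :: real
  assumes "0 \<le> x" "0 \<le> y"
  shows "x*y*sinh((x+y)/2)^2 \<le> sinh x * sinh y * ((x+y)/2)^2"
proof -
  define m where "m = (x+y)/2"
  define d where "d = (x-y)/2"
  have xm: "x = m + d" unfolding m_def d_def by (simp add: field_simps)
  have ym: "y = m - d" unfolding m_def d_def by (simp add: field_simps)
  have dm: "\<bar>d\<bar> \<le> m" unfolding m_def d_def using assms by auto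
  have "sinh \<bar>d\<bar> * m \<le> sinh m * \<bar>d\<bar>" using L2[OF _ dm] by simp
  moreover have "0 \<le> sinh \<bar>d\<bar> * m" using dm by simp
  ultimately have "(sinh \<bar>d\<bar> * m)^2 \<le> (sinh m * \<bar>d\<bar>)^2" by (rule power_mono)
  hence h: "sinh d ^2 * m^2 \<le> sinh m ^2 * d^2"
    by (cases "d \<ge> 0") (auto simp: power_mult_distrib)
  have xy: "x*y = m^2 - d^2" unfolding m_def d_def by (simp add: field_simps power2_eq_square)
  have "x*y*sinh((x+y)/2)^2 = (m^2 - d^2) * sinh m ^2" unfolding xy m_def[symmetric] by simp
  also have "\<dots> \<le> (sinh m ^ 2 - sinh d ^ 2) * m^2" using h by (simp add: algebra_simps)
  also have "\<dots> = sinh (m+d) * sinh (m-d) * m^2" by (simp only: sinh_prod)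
  also have "\<dots> = sinh x * sinh y * ((x+y)/2)^2" by (simp only: xm[symmetric] ym[symmetric]) (simp only: m_def)
  finally show ?thesis .
qed

lemma L4:
  fixes c u :: real
  assumes "0 \<le> c" "c \<ge> 1 \<or> c \<le> 1/2" "0 \<le> u"
  shows "c * sinh u \<le> cosh ((1-c)*u) * sinh (c*u)"
proof -
  have id: "2 * (cosh ((1-c)*u) * sinh (c*u)) = sinh u + sinh ((2*c-1)*u)"
  proof -
    have aux: "\<And>A B::real. sinh (A+B) + sinh (B - A) = 2*(cosh A * sinh B)"
      by (simp add: sinh_add sinh_diff)
    have "u = (1-c)*u + c*u" "(2*c-1)*u = c*u - (1-c)*u" by (simp_all add: algebra_simps)
    thus ?thesis using aux[of "(1-c)*u" "c*u"] by metis
  qed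
  have "(2*c-1) * sinh u \<le> sinh ((2*c-1)*u)"
    using assms(2)
  proof
    assume c1: "c \<ge> 1"
    have "sinh ((1/(2*c-1)) * ((2*c-1)*u)) \<le> (1/(2*c-1)) * sinh ((2*c-1)*u)"
      using c1 assms by (intro L1) auto
    hence "sinh u \<le> (1/(2*c-1)) * sinh ((2*c-1)*u)" using c1 by simp
    thus ?thesis using c1 by (simp add: field_simps)
  next
    assume c2: "c \<le> 1/2"
    have "sinh ((1-2*c)*u) \<le> (1-2*c) * sinh u"
      using c2 assms by (intro L1) auto
    moreover have "sinh ((2*c-1)*u) = - sinh ((1-2*c)*u)"
      by (metis minus_diff_eq mult_minus_left sinh_minus)
    ultimately show ?thesis by (simp add: algebra_simps)
  qed
  thus ?thesis using id by (simp add: algebra_simps)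
qed

lemma main_pos:
  fixes a b u :: real
  assumes "0 \<le> a" "0 \<le> b" "a + b \<ge> 1 \<or> a + b \<le> 1/2" "0 \<le> u"
  shows "4*a*b*sinh u ^2 \<le> cosh ((1-a-b)*u)^2 * sinh (2*a*u) * sinh (2*b*u)"
proof (cases "a + b = 0 \<or> u = 0")
  case True
  thus ?thesis
  proof
    assume "a+b=0" hence "a=0" "b=0" using assms by linarith+
    thus ?thesis by simp
  next
    assume "u=0" thus ?thesis by simp
  qed
next
  case False
  define c where "c = a + b"
  have cp: "c > 0" and up: "u > 0" using False assms unfolding c_def by auto
  have L0: "(2*a*u)*(2*b*u)*sinh((2*a*u+2*b*u)/2)^2 \<le> sinh (2*a*u) * sinh (2*b*u) * ((2*a*u+2*b*u)/2)^2"
    using assms by (intro L3) auto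
  have eq: "(2*a*u+2*b*u)/2 = c*u" unfolding c_def by (simp add: algebra_simps)
  have eq2: "(2*a*u)*(2*b*u) = 4*a*b*u^2" by (simp add: power2_eq_square)
  have L: "4*a*b*u^2*sinh(c*u)^2 \<le> sinh (2*a*u) * sinh (2*b*u) * (c*u)^2"
    using L0 unfolding eq eq2 .
  have cu: "(c*u)^2 > 0" using cp up by simp
  have "4*a*b*(sinh(c*u)/c)^2 = (4*a*b*u^2*sinh(c*u)^2)/(c*u)^2"
    using cp up by (simp add: field_simps power2_eq_square)
  also have "\<dots> \<le> sinh (2*a*u) * sinh (2*b*u)"
    using L cu by (simp only: pos_divide_le_eq)
  finally have S: "4*a*b*(sinh(c*u)/c)^2 \<le> sinh (2*a*u) * sinh (2*b*u)" .
  have "c * sinh u \<le> cosh ((1-c)*u) * sinh (c*u)"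
    using L4[of c u] assms cp unfolding c_def by auto
  hence "sinh u \<le> cosh ((1-c)*u) * (sinh (c*u) / c)" using cp by (simp add: field_simps)
  moreover have "0 \<le> sinh u" using up by simp
  ultimately have "sinh u ^2 \<le> (cosh ((1-c)*u) * (sinh (c*u) / c))^2" by (rule power_mono)
  hence "4*a*b*sinh u ^2 \<le> 4*a*b*(cosh ((1-c)*u) * (sinh (c*u) / c))^2"
    using assms by (intro mult_left_mono) auto
  also have "\<dots> = cosh ((1-c)*u)^2 * (4*a*b*(sinh (c*u) / c)^2)"
    unfolding power_mult_distrib by (simp only: mult_ac)
  also have "\<dots> \<le> cosh ((1-c)*u)^2 * (sinh (2*a*u) * sinh (2*b*u))"
    using S by (intro mult_left_mono) auto
  finally show ?thesis unfolding c_def by (simp add: algebra_simps)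
qed

lemma main_all:
  fixes a b u :: real
  assumes "0 \<le> a" "0 \<le> b" "a + b \<ge> 1 \<or> a + b \<le> 1/2"
  shows "4*a*b*sinh u ^2 \<le> cosh ((1-a-b)*u)^2 * sinh (2*a*u) * sinh (2*b*u)"
proof (cases "u \<ge> 0")
  case True thus ?thesis using main_pos assms by blast
next
  case False
  have "4*a*b*sinh (-u) ^2 \<le> cosh ((1-a-b)*(-u))^2 * sinh (2*a*(-u)) * sinh (2*b*(-u))"
    by (rule main_pos) (use assms False in auto)
  moreover have "sinh (2*a*(-u)) = - sinh (2*a*u)" "sinh (2*b*(-u)) = - sinh (2*b*u)"
    "cosh ((1-a-b)*(-u)) = cosh ((1-a-b)*u)"
    by (metis mult_minus_right sinh_minus cosh_minus)+
  ultimately show ?thesis by simp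
qed

theorem lemma3p3:
  fixes t \<alpha> \<beta> :: real
  assumes "t > 0" and "\<alpha> \<ge> 0" and "\<beta> \<ge> 0"
    and "\<alpha> + \<beta> \<ge> 1 \<or> \<alpha> + \<beta> \<le> 1/2"
  shows "(t powr (1 - \<alpha> - \<beta>) + 1)\<^sup>2 * (t powr (2*\<alpha>) - 1) * (t powr (2*\<beta>) - 1)
           \<ge> 16 * \<alpha> * \<beta> * (t - 1)\<^sup>2"
proof -
  define u where "u = ln t / 2"
  define g where "g = 1 - \<alpha> - \<beta>"
  have tu: "t = exp (2*u)" unfolding u_def using assms by simp
  have P: "\<And>z. t powr z = exp (2*z*u)" unfolding u_def powr_def using assms by simp
  have e1: "exp (2*g*u) + 1 = 2 * exp (g*u) * cosh (g*u)"
    by (simp add: cosh_def exp_minus field_simps flip: exp_add)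
  have e2: "\<And>z. exp (2*(2*z)*u) - 1 = 2 * exp (2*z*u) * sinh (2*z*u)"
    by (simp add: sinh_def exp_minus field_simps flip: exp_add)
  have e3: "t - 1 = 2 * exp u * sinh u"
    unfolding tu by (simp add: sinh_def exp_minus field_simps flip: exp_add)
  have LHS: "(t powr g + 1)\<^sup>2 * (t powr (2*\<alpha>) - 1) * (t powr (2*\<beta>) - 1)
     = 16 * exp (2*u) * (cosh (g*u)^2 * sinh (2*\<alpha>*u) * sinh (2*\<beta>*u))"
  proof -
    have "(t powr g + 1)\<^sup>2 * (t powr (2*\<alpha>) - 1) * (t powr (2*\<beta>) - 1)
      = (2 * exp (g*u) * cosh (g*u))^2 * (2 * exp (2*\<alpha>*u) * sinh (2*\<alpha>*u)) * (2 * exp (2*\<beta>*u) * sinh (2*\<beta>*u))"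
      unfolding P e1[symmetric] e2[symmetric] by simp
    also have "\<dots> = 16 * (exp (g*u)^2 * exp (2*\<alpha>*u) * exp (2*\<beta>*u)) * (cosh (g*u)^2 * sinh (2*\<alpha>*u) * sinh (2*\<beta>*u))"
      by (simp add: power_mult_distrib algebra_simps)
    also have "exp (g*u)^2 * exp (2*\<alpha>*u) * exp (2*\<beta>*u) = exp (2*u)"
      unfolding g_def by (simp add: power2_eq_square algebra_simps flip: exp_add)
    finally show ?thesis .
  qed
  have RHS: "16 * \<alpha> * \<beta> * (t - 1)\<^sup>2 = 16 * exp (2*u) * (4*\<alpha>*\<beta>*sinh u ^2)"
    unfolding e3 by (simp add: power_mult_distrib power2_eq_square algebra_simps flip: exp_add)
  have "4*\<alpha>*\<beta>*sinh u ^2 \<le> cosh (g*u)^2 * sinh (2*\<alpha>*u) * sinh (2*\<beta>*u)"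
    using main_all[OF assms(2-4)] unfolding g_def .
  hence "16 * exp (2*u) * (4*\<alpha>*\<beta>*sinh u ^2) \<le> 16 * exp (2*u) * (cosh (g*u)^2 * sinh (2*\<alpha>*u) * sinh (2*\<beta>*u))"
    by (intro mult_left_mono) auto
  hence "(t powr g + 1)\<^sup>2 * (t powr (2*\<alpha>) - 1) * (t powr (2*\<beta>) - 1)
           \<ge> 16 * \<alpha> * \<beta> * (t - 1)\<^sup>2" unfolding LHS RHS .
  thus ?thesis unfolding g_def .
qed

end
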